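(* Let $D$ be an E-simple integral domain with maximal subfield $K$. Let $f\in D\setminus K$ and $u\in K^\times$. Then $\frac{1}{f+u}$ and $\frac1f$ are associates in $R(D)$.
   Context: For an integral domain $D$ with fraction field $F$, the reciprocal complement $R(D)$ is the subring of $F$ generated by all $1/d$, $d\in D\setminus\{0\}$. An element $d\in D$ is Egyptian if $d\in R(D)$. $D$ is E-simple if every Egyptian element of $D$ is a unit; in that case the set $K$ of Egyptian elements of $D$ together with $0$ is a subfield of $D$, called its maximal subfield. *)

theory Defs
  imports "HOL-Computational_Algebra.Fraction_Field"
begin

text \<open>The domain D is the type 'a (class idom); its fraction field is 'a fract,
  with D embedded via d maps to Fract d 1.\<close>

inductive_set recip_compl :: "'a::idom fract set" where
  gen: "d \<noteq> 0 \<Longrightarrow> inverse (Fract d 1) \<in> recip_compl"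
| one: "1 \<in> recip_compl"
| neg: "x \<in> recip_compl \<Longrightarrow> - x \<in> recip_compl"
| add: "x \<in> recip_compl \<Longrightarrow> y \<in> recip_compl \<Longrightarrow> x + y \<in> recip_compl"
| mult: "x \<in> recip_compl \<Longrightarrow> y \<in> recip_compl \<Longrightarrow> x * y \<in> recip_compl"

definition egyptian :: "'a::idom \<Rightarrow> bool" where
  "egyptian d \<longleftrightarrow> d \<noteq> 0 \<and> Fract d 1 \<in> recip_compl"

definition E_simple :: "'a::idom itself \<Rightarrow> bool" where
  "E_simple _ \<longleftrightarrow> (\<forall>d::'a. egyptian d \<longrightarrow> d dvd 1)"

definition max_subfield :: "'a::idom set" where
  "max_subfield = {d. egyptian d} \<union> {0}"

definition assoc_in_R :: "'a::idom fract \<Rightarrow> 'a fract \<Rightarrow> bool" where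
  "assoc_in_R x y \<longleftrightarrow> x \<in> recip_compl \<and> y \<in> recip_compl \<and>
     (\<exists>v\<in>recip_compl. x = v * y) \<and> (\<exists>w\<in>recip_compl. y = w * x)"

end

theory Submission
  imports Defs
begin

theorem mainTheorem5:
  fixes f u :: "'a::idom"
  assumes "E_simple TYPE('a)"
    and "f \<notin> max_subfield"
    and "u \<in> max_subfield" and "u \<noteq> 0"
  shows "assoc_in_R (inverse (Fract (f + u) 1)) (inverse (Fract f 1))"
proof -
  have f0: "f \<noteq> 0" using assms(2) by (auto simp: max_subfield_def)
  have U: "Fract u 1 \<in> recip_compl" using assms(3,4) by (auto simp: max_subfield_def egyptian_def)
  have fu0: "f + u \<noteq> 0"
  proof
    assume "f + u = 0"
    then have "f = - u" by (simp add: add_eq_0_iff)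
    then have "Fract f 1 = - Fract u 1" by simp
    then have "Fract f 1 \<in> recip_compl" using recip_compl.neg[OF U] by (metis minus_fract)
    then show False using assms(2) f0 by (auto simp: max_subfield_def egyptian_def)
  qed
  define F where "F = Fract f 1"
  define V where "V = Fract u 1"
  have F0: "F \<noteq> 0" using f0 by (simp add: F_def Zero_fract_def eq_fract)
  have FV: "Fract (f + u) 1 = F + V" by (simp add: F_def V_def)
  have FV0: "F + V \<noteq> 0" using fu0 unfolding FV[symmetric] by (simp add: Zero_fract_def eq_fract)
  have IF: "inverse F \<in> recip_compl" using f0 F_def recip_compl.gen by blast
  have IFV: "inverse (F + V) \<in> recip_compl" using fu0 FV recip_compl.gen by metis
  have V: "V \<in> recip_compl" using U V_def by simp
  have e1: "inverse (F + V) = (1 + - (V * inverse (F + V))) * inverse F"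
    using F0 FV0 by (simp add: field_simps)
  have e2: "inverse F = (1 + V * inverse F) * inverse (F + V)"
    using F0 FV0 by (simp add: field_simps)
  have m1: "1 + - (V * inverse (F + V)) \<in> recip_compl"
    by (intro recip_compl.add recip_compl.one recip_compl.neg recip_compl.mult V IFV)
  have m2: "1 + V * inverse F \<in> recip_compl"
    by (intro recip_compl.add recip_compl.one recip_compl.mult V IF)
  show ?thesis unfolding assoc_in_R_def FV F_def[symmetric]
    using IF IFV e1 e2 m1 m2 by blast
qed

end
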